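(* For all states $s, s'$: if $s$ is consistent and $s \rightsquigarrow s'$, then $s'$ is consistent.
   Context: Findel execution model. Addresses, times, identifiers and amounts are natural numbers; address $0$ is the default address. Currencies form the finite set $\{\mathtt{USD},\mathtt{EUR},\mathtt{GBP},\mathtt{JPY},\mathtt{CNY},\mathtt{SGD},\mathtt{NONE}\}$. Primitives are the terms generated by: $\mathtt{Zero}$; $\mathtt{One}(cur)$; $\mathtt{Scale}(m,P)$ with $m\in\mathbb N$; $\mathtt{ScaleObs}(a,P)$ with $a$ an address; $\mathtt{Give}(P)$; $\mathtt{And}(P_1,P_2)$; $\mathtt{Or}(P_1,P_2)$; $\mathtt{If}(a,P_1,P_2)$; $\mathtt{Timebound}(t_0,t_1,P)$ with $t_0,t_1\in\mathbb N$. A transaction is a tuple $(\mathit{id},\mathit{ctr\_id},\mathit{from},\mathit{to},\mathit{amount},\mathit{currency},\mathit{timestamp})$. A contract $c$ is a record with fields $id(c)$, $dsc(c)$ (a description id), $prim(c)$ (a primitive), $issuer(c)$, $owner(c)$, $po(c)$ (proposed owner), $sc(c)\in\mathbb N$ (scale). A description $d$ has fields $id(d)$, $prim(d)$, $sc(d)$, $vfrom(d)$, $vuntil(d)$. A gateway list is a list of (address, value, timestamp) triples, and $\mathrm{query}(G,a,\tau)\in\mathbb N\cup\{\mathrm{None}\}$ is a fixed function. A balance maps (address, currency) pairs to integers. The function $\mathrm{execute}(P,k,I,O,B,\tau,G,cid,did,n,L)$ returns either $\mathrm{None}$ or a result $(B',C',n',L')$ (new balance, list of generated contracts, next fresh id,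 ledger); it is defined by recursion on $P$: - $\mathtt{Zero}$: $(B,[\,],n,L)$. - $\mathtt{One}(cur)$: $(B_1,[\,],n+1,(n,cid,I,O,k,cur,\tau)::L)$ where $B_1$ is $B$ with $B(I,cur)$ decreased by $k$ and then $B(O,cur)$ increased by $k$. - $\mathtt{Scale}(m,P')$: $\mathrm{execute}(P',k\cdot m,I,O,B,\tau,G,cid,did,n,L)$. - $\mathtt{ScaleObs}(a,P')$: $\mathrm{None}$ if $\mathrm{query}(G,a,\tau)=\mathrm{None}$; if it equals $r$, $\mathrm{execute}(P',k\cdot r,I,O,\dots)$ with the other arguments unchanged. - $\mathtt{Give}(P')$: $\mathrm{execute}(P',k,O,I,B,\tau,G,cid,did,n,L)$ (issuer and owner swapped). - $\mathtt{And}(P_1,P_2)$: execute $P_1$; if $\mathrm{None}$, return $\mathrm{None}$; if $(B_1,C_1,n_1,L_1)$, execute $P_2$ with balance $B_1$, fresh id $n_1$, ledger $L_1$ (other arguments unchanged); if $\mathrm{None}$ return $\mathrm{None}$, if $(B_2,C_2,n_2,L_2)$ return $(B_2,C_1{+\!\!+}C_2,n_2,L_2)$. - $\mathtt{If}(a,P_1,P_2)$: $\mathrm{None}$ if the query of $a$ is $\mathrm{None}$; if the value is $0$ execute $P_2$, otherwise execute $P_1$ (same arguments). - $\mathtt{Timebound}(t_0,t_1,P')$: if $t_1<\tau$ return $\mathrm{None}$; else if $t_0<\tau$ execute $P'$ with the same arguments; else return $(B,[c'],n+2,L)$ where $c'$ has id $n+1$, description id $did$, primitive $\mathtt{Timebound}(t_0,t_1,P')$,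 issuer $I$, owner $O$, proposed owner $O$, scale $k$. - $\mathtt{Or}(P_1,P_2)$: return $(B,[c'],n+2,L)$ where $c'$ has id $n+1$, description id $did$, primitive $\mathtt{Or}(P_1,P_2)$, issuer $I$, owner $O$, proposed owner $O$, scale $k$. A state $s$ consists of a list of contracts $\mathcal C(s)$, a list of descriptions $\mathcal D(s)$, a balance $\mathcal B(s)$, a time $time(s)$, a gateway list $\mathcal G(s)$, a fresh id $fresh(s)$, a ledger (list of transactions) $\mathcal L(s)$, and a list of events $\mathtt E(s)$, events being $\mathtt{IssuedFor}(O,i)$, $\mathtt{Executed}(i)$, $\mathtt{Deleted}(i)$. The step relation $s\curvearrowright s'$ holds iff one of the following applies: [Issue] for some $d\in\mathcal D(s)$ and addresses $I,O$: $s'$ equals $s$ except $\mathcal C(s')=c::\mathcal C(s)$ with $c=(id=fresh(s),dsc=id(d),prim=prim(d),issuer=I,owner=I,po=O,sc=sc(d))$, $fresh(s')=fresh(s)+1$, $\mathtt E(s')=\mathtt{IssuedFor}(O,fresh(s))::\mathtt E(s)$. For the remaining execution rules, take $c\in\mathcal C(s)$ and an address $O$ (the joiner) with (A) $po(c)=O$ or $po(c)=0$, and (C) some $d\in\mathcal D(s)$ with $id(d)=dsc(c)$ and $vfrom(d)\le time(s)\le vuntil(d)$; write $X(Q)=\mathrm{execute}(Q,sc(c),issuer(c),O,\mathcal B(s),time(s),\mathcal G(s),id(c),dsc(c),fresh(s),\mathcal L(s))$. [Join] $prim(c)$ is not of the form $\mathtt{Or}(\_,\_)$ and $X(prim(c))=(B',C',n',L')$: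 $s'$ has contracts $\mathcal C(s)$ with $c$ removed, followed by $C'$; balance $B'$; fresh id $n'$; ledger $L'$; events $\mathtt{Executed}(id(c))::\mathtt E(s)$; other components unchanged. [Join Or] $prim(c)=\mathtt{Or}(P_1,P_2)$ and for some $Q\in\{P_1,P_2\}$, $X(Q)=(B',C',n',L')$: same update as [Join]. [Fail] $X(Q)=\mathrm{None}$, where $Q=prim(c)$ if $prim(c)$ is not an $\mathtt{Or}$, and $Q\in\{P_1,P_2\}$ if $prim(c)=\mathtt{Or}(P_1,P_2)$: $s'$ equals $s$ except $c$ is removed from the contracts and $\mathtt E(s')=\mathtt{Deleted}(id(c))::\mathtt E(s)$. [Tick] $s'$ equals $s$ except $time(s')=time(s)+1$. $\rightsquigarrow$ is the reflexive–transitive closure of $\curvearrowright$. A state $s$ is consistent if: (1) $fresh(s)>id(c)$ for all $c\in\mathcal C(s)$; (2) $fresh(s)>i$ whenever $\mathtt{Executed}(i)\in\mathtt E(s)$ or $\mathtt{Deleted}(i)\in\mathtt E(s)$; (3) for all $c\in\mathcal C(s)$, $\mathtt{Executed}(id(c))\notin\mathtt E(s)$ and $\mathtt{Deleted}(id(c))\notin\mathtt E(s)$; (4) for no $i$ are both $\mathtt{Executed}(i)$ and $\mathtt{Deleted}(i)$ in $\mathtt E(s)$. *)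

theory Defs
  imports Main
begin

type_synonym address = nat
type_synonym time = nat

datatype currency = USD | EUR | GBP | JPY | CNY | SGD | NONE

datatype primitive =
    Zero
  | One currency
  | Scale nat primitive
  | ScaleObs address primitive
  | Give primitive
  | And primitive primitive
  | Or primitive primitive
  | If address primitive primitive
  | Timebound time time primitive

record transaction =
  tr_id :: nat
  tr_ctr_id :: nat
  tr_from :: address
  tr_to :: address
  tr_amount :: nat
  tr_currency :: currency
  tr_timestamp :: time

record contract =
  ctr_id :: nat
  ctr_dsc :: nat
  ctr_prim :: primitive
  ctr_issuer :: address
  ctr_owner :: address
  ctr_po :: address
  ctr_sc :: nat

record description =
  dsc_id :: nat
  dsc_prim :: primitive
  dsc_sc :: nat
  dsc_vfrom :: time
  dsc_vuntil :: time

type_synonym gateway = "(address \<times> nat \<times> time) list"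

(* the fixed query function is kept as an arbitrary parameter *)
type_synonym query_fun = "gateway \<Rightarrow> address \<Rightarrow> time \<Rightarrow> nat option"

type_synonym balance = "address \<times> currency \<Rightarrow> int"

type_synonym result = "balance \<times> contract list \<times> nat \<times> transaction list"

definition transfer :: "balance \<Rightarrow> address \<Rightarrow> address \<Rightarrow> currency \<Rightarrow> nat \<Rightarrow> balance" where
  "transfer B I Ow cur k =
     (let B0 = B((I, cur) := B (I, cur) - int k) in B0((Ow, cur) := B0 (Ow, cur) + int k))"

definition mk_contract :: "nat \<Rightarrow> nat \<Rightarrow> primitive \<Rightarrow> address \<Rightarrow> address \<Rightarrow> address \<Rightarrow> nat \<Rightarrow> contract" where
  "mk_contract i d p iss own po sc =
     \<lparr>ctr_id = i, ctr_dsc = d, ctr_prim = p, ctr_issuer = iss, ctr_owner = own, ctr_po = po, ctr_sc = sc\<rparr>"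

fun execute :: "query_fun \<Rightarrow> primitive \<Rightarrow> nat \<Rightarrow> address \<Rightarrow> address \<Rightarrow> balance \<Rightarrow> time \<Rightarrow> gateway
                 \<Rightarrow> nat \<Rightarrow> nat \<Rightarrow> nat \<Rightarrow> transaction list \<Rightarrow> result option" where
  "execute q Zero k I Ow B \<tau> G cid did n L = Some (B, [], n, L)"
| "execute q (One cur) k I Ow B \<tau> G cid did n L =
     Some (transfer B I Ow cur k, [], n + 1,
           \<lparr>tr_id = n, tr_ctr_id = cid, tr_from = I, tr_to = Ow, tr_amount = k,
            tr_currency = cur, tr_timestamp = \<tau>\<rparr> # L)"
| "execute q (Scale m P) k I Ow B \<tau> G cid did n L = execute q P (k * m) I Ow B \<tau> G cid did n L"
| "execute q (ScaleObs a P) k I Ow B \<tau> G cid did n L =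
     (case q G a \<tau> of None \<Rightarrow> None
      | Some r \<Rightarrow> execute q P (k * r) I Ow B \<tau> G cid did n L)"
| "execute q (Give P) k I Ow B \<tau> G cid did n L = execute q P k Ow I B \<tau> G cid did n L"
| "execute q (And P1 P2) k I Ow B \<tau> G cid did n L =
     (case execute q P1 k I Ow B \<tau> G cid did n L of None \<Rightarrow> None
      | Some (B1, C1, n1, L1) \<Rightarrow>
          (case execute q P2 k I Ow B1 \<tau> G cid did n1 L1 of None \<Rightarrow> None
           | Some (B2, C2, n2, L2) \<Rightarrow> Some (B2, C1 @ C2, n2, L2)))"
| "execute q (If a P1 P2) k I Ow B \<tau> G cid did n L =
     (case q G a \<tau> of None \<Rightarrow> None
      | Some v \<Rightarrow> (if v = 0 then execute q P2 k I Ow B \<tau> G cid did n L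
                   else execute q P1 k I Ow B \<tau> G cid did n L))"
| "execute q (Timebound t0 t1 P) k I Ow B \<tau> G cid did n L =
     (if t1 < \<tau> then None
      else if t0 < \<tau> then execute q P k I Ow B \<tau> G cid did n L
      else Some (B, [mk_contract (n + 1) did (Timebound t0 t1 P) I Ow Ow k], n + 2, L))"
| "execute q (Or P1 P2) k I Ow B \<tau> G cid did n L =
     Some (B, [mk_contract (n + 1) did (Or P1 P2) I Ow Ow k], n + 2, L)"

datatype event = IssuedFor address nat | Executed nat | Deleted nat

record state =
  st_contracts :: "contract list"
  st_descs :: "description list"
  st_balance :: balance
  st_time :: time
  st_gateway :: gateway
  st_fresh :: nat
  st_ledger :: "transaction list"
  st_events :: "event list"

fun is_Or :: "primitive \<Rightarrow> bool" where
  "is_Or (Or _ _) = True"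
| "is_Or _ = False"

definition exec_in :: "query_fun \<Rightarrow> state \<Rightarrow> contract \<Rightarrow> address \<Rightarrow> primitive \<Rightarrow> result option" where
  "exec_in q s c Ow Q =
     execute q Q (ctr_sc c) (ctr_issuer c) Ow (st_balance s) (st_time s) (st_gateway s)
             (ctr_id c) (ctr_dsc c) (st_fresh s) (st_ledger s)"

definition remove_ctr :: "contract \<Rightarrow> contract list \<Rightarrow> contract list" where
  "remove_ctr c cs = filter (\<lambda>x. ctr_id x \<noteq> ctr_id c) cs"

definition exec_ok :: "state \<Rightarrow> contract \<Rightarrow> address \<Rightarrow> bool" where
  "exec_ok s c Ow \<longleftrightarrow> c \<in> set (st_contracts s) \<and> (ctr_po c = Ow \<or> ctr_po c = 0) \<and>
     (\<exists>d \<in> set (st_descs s). dsc_id d = ctr_dsc c \<and> dsc_vfrom d \<le> st_time s \<and> st_time s \<le> dsc_vuntil d)"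

definition exec_choice :: "contract \<Rightarrow> primitive \<Rightarrow> bool" where
  "exec_choice c Q \<longleftrightarrow>
     (case ctr_prim c of Or P1 P2 \<Rightarrow> Q = P1 \<or> Q = P2 | _ \<Rightarrow> Q = ctr_prim c)"

inductive step :: "query_fun \<Rightarrow> state \<Rightarrow> state \<Rightarrow> bool" for q where
  Issue: "d \<in> set (st_descs s) \<Longrightarrow>
    s' = s\<lparr>st_contracts := mk_contract (st_fresh s) (dsc_id d) (dsc_prim d) I I Ow (dsc_sc d) # st_contracts s,
           st_fresh := st_fresh s + 1,
           st_events := IssuedFor Ow (st_fresh s) # st_events s\<rparr> \<Longrightarrow>
    step q s s'"
| Join: "exec_ok s c Ow \<Longrightarrow> \<not> is_Or (ctr_prim c) \<Longrightarrow>
    exec_in q s c Ow (ctr_prim c) = Some (B', C', n', L') \<Longrightarrow>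
    s' = s\<lparr>st_contracts := remove_ctr c (st_contracts s) @ C', st_balance := B',
           st_fresh := n', st_ledger := L', st_events := Executed (ctr_id c) # st_events s\<rparr> \<Longrightarrow>
    step q s s'"
| JoinOr: "exec_ok s c Ow \<Longrightarrow> ctr_prim c = Or P1 P2 \<Longrightarrow> Q \<in> {P1, P2} \<Longrightarrow>
    exec_in q s c Ow Q = Some (B', C', n', L') \<Longrightarrow>
    s' = s\<lparr>st_contracts := remove_ctr c (st_contracts s) @ C', st_balance := B',
           st_fresh := n', st_ledger := L', st_events := Executed (ctr_id c) # st_events s\<rparr> \<Longrightarrow>
    step q s s'"
| Fail: "exec_ok s c Ow \<Longrightarrow> exec_choice c Q \<Longrightarrow> exec_in q s c Ow Q = None \<Longrightarrow>
    s' = s\<lparr>st_contracts := remove_ctr c (st_contracts s),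
           st_events := Deleted (ctr_id c) # st_events s\<rparr> \<Longrightarrow>
    step q s s'"
| Tick: "s' = s\<lparr>st_time := st_time s + 1\<rparr> \<Longrightarrow> step q s s'"

abbreviation steps :: "query_fun \<Rightarrow> state \<Rightarrow> state \<Rightarrow> bool" where
  "steps q \<equiv> (step q)\<^sup>*\<^sup>*"

definition consistent :: "state \<Rightarrow> bool" where
  "consistent s \<longleftrightarrow>
     (\<forall>c \<in> set (st_contracts s). st_fresh s > ctr_id c) \<and>
     (\<forall>i. (Executed i \<in> set (st_events s) \<or> Deleted i \<in> set (st_events s)) \<longrightarrow> st_fresh s > i) \<and>
     (\<forall>c \<in> set (st_contracts s). Executed (ctr_id c) \<notin> set (st_events s) \<and> Deleted (ctr_id c) \<notin> set (st_events s)) \<and>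
     (\<nexists>i. Executed i \<in> set (st_events s) \<and> Deleted i \<in> set (st_events s))"

end

theory Submission
  imports Defs
begin

lemma exec_ids:
  "execute q P k I Ow B \<tau> G cid did n L = Some (B', C', n', L') \<Longrightarrow>
   n \<le> n' \<and> (\<forall>c\<in>set C'. n < ctr_id c \<and> ctr_id c < n')"
proof (induction P arbitrary: k I Ow B n L B' C' n' L')
  case (And P1 P2)
  obtain B1 C1 n1 L1 where e1: "execute q P1 k I Ow B \<tau> G cid did n L = Some (B1, C1, n1, L1)"
    using And.prems by (auto split: option.splits)
  obtain B2 C2 n2 L2 where e2: "execute q P2 k I Ow B1 \<tau> G cid did n1 L1 = Some (B2, C2, n2, L2)"
    using And.prems e1 by (auto split: option.splits)
  have r: "B' = B2" "C' = C1 @ C2" "n' = n2" "L' = L2" using And.prems e1 e2 by auto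
  from And.IH(1)[OF e1] And.IH(2)[OF e2] show ?case using r by fastforce
next
  case (ScaleObs a P)
  then show ?case by (auto split: option.splits)
next
  case (If a P1 P2)
  then show ?case by (auto split: option.splits if_splits)
next
  case (Timebound t0 t1 P)
  then show ?case by (auto split: if_splits simp: mk_contract_def)
qed (auto simp: mk_contract_def)

lemma cons_gen:
  assumes cs: "consistent s" and cin: "c \<in> set (st_contracts s)"
    and n: "st_fresh s \<le> n'" and C: "\<forall>x\<in>set C'. st_fresh s < ctr_id x \<and> ctr_id x < n'"
    and s': "st_contracts s' = remove_ctr c (st_contracts s) @ C'" "st_fresh s' = n'"
    and ev: "st_events s' = e # st_events s" "e = Executed (ctr_id c) \<or> e = Deleted (ctr_id c)"
  shows "consistent s'"
proof -
  have c1: "\<forall>x\<in>set (st_contracts s). ctr_id x < st_fresh s"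
   and c2: "\<forall>i. Executed i \<in> set (st_events s) \<or> Deleted i \<in> set (st_events s) \<longrightarrow> i < st_fresh s"
   and c3: "\<forall>x\<in>set (st_contracts s). Executed (ctr_id x) \<notin> set (st_events s) \<and> Deleted (ctr_id x) \<notin> set (st_events s)"
   and c4: "\<nexists>i. Executed i \<in> set (st_events s) \<and> Deleted i \<in> set (st_events s)"
    using cs unfolding consistent_def by blast+
  have idc: "ctr_id c < st_fresh s" using c1 cin by blast
  have nc: "Executed (ctr_id c) \<notin> set (st_events s)" "Deleted (ctr_id c) \<notin> set (st_events s)"
    using c3 cin by blast+
  have mem: "x \<in> set (st_contracts s') \<Longrightarrow> (x \<in> set (st_contracts s) \<and> ctr_id x \<noteq> ctr_id c) \<or> x \<in> set C'" for x
    using s'(1) by (auto simp: remove_ctr_def)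
  have evm: "x \<in> set (st_events s') \<longleftrightarrow> x = e \<or> x \<in> set (st_events s)" for x
    using ev(1) by auto
  show ?thesis unfolding consistent_def
  proof (intro conjI)
    show "\<forall>x\<in>set (st_contracts s'). ctr_id x < st_fresh s'"
      using mem c1 C n s'(2) by fastforce
    show "\<forall>i. Executed i \<in> set (st_events s') \<or> Deleted i \<in> set (st_events s') \<longrightarrow> i < st_fresh s'"
      using evm ev(2) c2 idc n s'(2) by fastforce
    show "\<forall>x\<in>set (st_contracts s'). Executed (ctr_id x) \<notin> set (st_events s') \<and> Deleted (ctr_id x) \<notin> set (st_events s')"
    proof
      fix x assume "x \<in> set (st_contracts s')"
      then have "(x \<in> set (st_contracts s) \<and> ctr_id x \<noteq> ctr_id c) \<or> x \<in> set C'" by (rule mem)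
      then show "Executed (ctr_id x) \<notin> set (st_events s') \<and> Deleted (ctr_id x) \<notin> set (st_events s')"
      proof
        assume h: "x \<in> set (st_contracts s) \<and> ctr_id x \<noteq> ctr_id c"
        then show ?thesis using c3 evm ev(2) by auto
      next
        assume h: "x \<in> set C'"
        then have "st_fresh s < ctr_id x" using C by blast
        then have a: "st_fresh s < ctr_id x" .
        have "Executed (ctr_id x) \<notin> set (st_events s)" "Deleted (ctr_id x) \<notin> set (st_events s)"
          using c2 a by (meson not_less_iff_gr_or_eq)+
        moreover have "Executed (ctr_id x) \<noteq> e" "Deleted (ctr_id x) \<noteq> e"
          using ev(2) idc a by auto
        ultimately show ?thesis using evm by blast
      qed
    qed
    show "\<nexists>i. Executed i \<in> set (st_events s') \<and> Deleted i \<in> set (st_events s')"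
      using c4 evm ev(2) nc by auto
  qed
qed

lemma step_cons:
  assumes "consistent s" "step q s s'"
  shows "consistent s'"
  using assms(2)
proof cases
  case (Issue d I Ow)
  show ?thesis
    unfolding consistent_def
  proof (intro conjI)
    show "\<forall>c\<in>set (st_contracts s'). ctr_id c < st_fresh s'"
      using Issue assms(1) by (auto simp: consistent_def mk_contract_def)
    show "\<forall>i. Executed i \<in> set (st_events s') \<or> Deleted i \<in> set (st_events s') \<longrightarrow> i < st_fresh s'"
      using Issue assms(1) unfolding consistent_def by fastforce
    show "\<forall>c\<in>set (st_contracts s'). Executed (ctr_id c) \<notin> set (st_events s') \<and> Deleted (ctr_id c) \<notin> set (st_events s')"
      using Issue assms(1) unfolding consistent_def by (auto simp: mk_contract_def)
    show "\<nexists>i. Executed i \<in> set (st_events s') \<and> Deleted i \<in> set (st_events s')"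
      using Issue assms(1) unfolding consistent_def by auto
  qed
next
  case (Join c Ow B' C' n' L')
  have ids: "st_fresh s \<le> n'" "\<forall>x\<in>set C'. st_fresh s < ctr_id x \<and> ctr_id x < n'"
    using exec_ids[OF Join(3)[unfolded exec_in_def]] by auto
  have cin: "c \<in> set (st_contracts s)" using Join(1) by (simp add: exec_ok_def)
  show ?thesis by (rule cons_gen[OF assms(1) cin ids]) (use Join(4) in auto)
next
  case (JoinOr c Ow P1 P2 Q B' C' n' L')
  have ids: "st_fresh s \<le> n'" "\<forall>x\<in>set C'. st_fresh s < ctr_id x \<and> ctr_id x < n'"
    using exec_ids[OF JoinOr(4)[unfolded exec_in_def]] by auto
  have cin: "c \<in> set (st_contracts s)" using JoinOr(1) by (simp add: exec_ok_def)
  show ?thesis by (rule cons_gen[OF assms(1) cin ids]) (use JoinOr(5) in auto)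
next
  case (Fail c Ow Q)
  have cin: "c \<in> set (st_contracts s)" using Fail(1) by (simp add: exec_ok_def)
  show ?thesis by (rule cons_gen[OF assms(1) cin, of "st_fresh s" "[]"]) (use Fail(4) in auto)
next
  case Tick
  then show ?thesis using assms(1) by (simp add: consistent_def)
qed

theorem theorem1:
  fixes q :: query_fun and s s' :: state
  assumes "consistent s" and "steps q s s'"
  shows "consistent s'"
  using assms(2,1)
  by (induction rule: rtranclp_induct) (auto intro: step_cons)

end
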